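(* Let $K_{c2}>0$ and let $K\mapsto\theta^*(K)$, $K\in(K_{c2},K_0)$, be a continuously differentiable family of stable phase-locked steady states of the Kuramoto network with coupling strength $K$. Let $\lambda_2(K)<0$ be the largest nonzero eigenvalue of the Jacobian $J(K)$ at $\theta^*(K)$ with a unit eigenvector $v_2(K)$. Suppose the phase-locked state loses stability at $K_{c2}$ in the sense that $\lambda_2(K)\to 0$ as $K\to K_{c2}^+$, and suppose $v_2\cdot\omega\neq 0$ in the limit, i.e. there is $c>0$ with $|v_2(K)\cdot\omega|\ge c$ for all $K$ near $K_{c2}$. Then $$\frac{d r_{\rm uni}(\theta^*(K))}{dK}\to+\infty\quad\text{as } K\to K_{c2}^+ .$$
   Context: Kuramoto network: $N\ge 2$ oscillators with phases $\theta_i(t)$ obeying $\frac{d\theta_i}{dt}=\omega_i+K\sum_{j=1}^N A_{i,j}\sin(\theta_j-\theta_i)$, where $\omega=(\omega_1,\dots,\omega_N)^T\in\mathbb{R}^N$ are natural frequencies with $\sum_{i=1}^N\omega_i=0$, $K>0$ is the coupling strength, and $A=(A_{i,j})$ is the symmetric adjacency matrix ($A_{i,j}=A_{j,i}\in\{0,1\}$, $A_{i,i}=0$) of a connected undirected graph; $k_i=\sum_j A_{i,j}$ is the degree of node $i$. A phase-locked steady state is a vector $\theta^*\in\mathbb{R}^N$ with $\omega_i+K\sum_j A_{i,j}\sin(\theta_j^*-\theta_i^* )=0$ for all $i$. Its Jacobian $J$ is the symmetric matrix with $J_{i,j}=KA_{i,j}\cos(\theta_i^*-\theta_j^* )$ for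 $i\neq j$ and $J_{i,i}=-K\sum_j A_{i,j}\cos(\theta_i^*-\theta_j^* )$; it always has eigenvalue $\lambda_1=0$ with eigenvector $(1,\dots,1)^T$. The state is called stable if all remaining eigenvalues $\lambda_2\ge\dots\ge\lambda_N$ of $J$ are strictly negative. $K_{c2}$ denotes the critical coupling at which the fully phase-locked state appears/loses stability (in a saddle-node bifurcation). The order parameter is $r_{\rm uni}=\frac{1}{\sum_i k_i}\sum_{i,j}A_{i,j}\langle\cos(\theta_i-\theta_j)\rangle_t$, which for a steady state equals $r_{\rm uni}(\theta^* )=\frac{1}{\sum_i k_i}\sum_{i,j}A_{i,j}\cos(\theta_i^*-\theta_j^* )$. *)

theory Defs
  imports "HOL-Analysis.Analysis"
begin

definition simple_graph_adj :: "real^'n^'n \<Rightarrow> bool" where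
  "simple_graph_adj A \<longleftrightarrow>
     (\<forall>i j. A$i$j = 0 \<or> A$i$j = 1) \<and> (\<forall>i j. A$i$j = A$j$i) \<and> (\<forall>i. A$i$i = 0)"

definition connected_adj :: "real^'n^'n \<Rightarrow> bool" where
  "connected_adj A \<longleftrightarrow> (\<forall>i j. (i, j) \<in> {(a, b). A$a$b = 1}\<^sup>*)"

definition degree :: "real^'n^'n \<Rightarrow> 'n \<Rightarrow> real" where
  "degree A i = (\<Sum>j\<in>UNIV. A$i$j)"

definition phase_locked :: "real^'n \<Rightarrow> real \<Rightarrow> real^'n^'n \<Rightarrow> real^'n \<Rightarrow> bool" where
  "phase_locked \<omega> K A \<theta> \<longleftrightarrow>
     (\<forall>i. \<omega>$i + K * (\<Sum>j\<in>UNIV. A$i$j * sin (\<theta>$j - \<theta>$i)) = 0)"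

definition jacobian :: "real \<Rightarrow> real^'n^'n \<Rightarrow> real^'n \<Rightarrow> real^'n^'n" where
  "jacobian K A \<theta> = (\<chi> i j. if i = j then - K * (\<Sum>l\<in>UNIV. A$i$l * cos (\<theta>$i - \<theta>$l))
                               else K * A$i$j * cos (\<theta>$i - \<theta>$j))"

definition is_eigenvalue :: "real^'n^'n \<Rightarrow> real \<Rightarrow> bool" where
  "is_eigenvalue M \<mu> \<longleftrightarrow> (\<exists>v. v \<noteq> 0 \<and> M *v v = \<mu> *\<^sub>R v)"

text \<open>Since the Jacobian is symmetric, simplicity of
  the eigenvalue 0 is expressed as: its eigenspace is spanned by (1,...,1).\<close>
definition stable_state :: "real \<Rightarrow> real^'n^'n \<Rightarrow> real^'n \<Rightarrow> bool" where
  "stable_state K A \<theta> \<longleftrightarrow>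
     (let J = jacobian K A \<theta> in
        {v. J *v v = 0} = span {(\<chi> i. (1::real))} \<and>
        (\<forall>\<mu>. is_eigenvalue J \<mu> \<and> \<mu> \<noteq> 0 \<longrightarrow> \<mu> < 0))"

definition r_uni :: "real^'n^'n \<Rightarrow> real^'n \<Rightarrow> real" where
  "r_uni A \<theta> = (1 / (\<Sum>i\<in>UNIV. degree A i)) *
                 (\<Sum>i\<in>UNIV. \<Sum>j\<in>UNIV. A$i$j * cos (\<theta>$i - \<theta>$j))"

end

theory Submission imports Defs begin

lemma sym_dot:
  fixes M :: "real^'n^'n"
  assumes "\<And>i j. M$i$j = M$j$i"
  shows "x \<bullet> (M *v y) = y \<bullet> (M *v x)"
proof -
  have "x \<bullet> (M *v y) = (\<Sum>i\<in>UNIV. \<Sum>j\<in>UNIV. x$i * M$i$j * y$j)"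
    unfolding inner_vec_def matrix_vector_mult_def by (simp add: sum_distrib_left mult_ac)
  also have "\<dots> = (\<Sum>j\<in>UNIV. \<Sum>i\<in>UNIV. x$i * M$i$j * y$j)" by (rule sum.swap)
  also have "\<dots> = y \<bullet> (M *v x)"
    unfolding inner_vec_def matrix_vector_mult_def
    by (simp add: sum_distrib_left mult_ac assms)
  finally show ?thesis .
qed

lemma quad_expand:
  fixes M :: "real^'n^'n"
  assumes "\<And>i j. M$i$j = M$j$i"
  shows "(x + t *\<^sub>R u) \<bullet> (M *v (x + t *\<^sub>R u)) = x \<bullet> (M *v x) + 2 * t * (u \<bullet> (M *v x)) + t^2 * (u \<bullet> (M *v u))"
  using sym_dot[OF assms, of x u]
  by (simp add: matrix_vector_right_distrib matrix_vector_mult_scaleR inner_add_left inner_add_right power2_eq_square algebra_simps)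

lemma arith_aux:
  fixes \<mu> t b Q a c :: real
  assumes "Z \<le> \<mu> * W" "Z = \<mu> + 2*t*b + t^2*Q" "W = 1 + 2*t*a + t^2*c" "c = \<mu>*a - b"
  shows "0 \<le> 2*t*c + t^2*(\<mu>*c - Q)"
proof -
  have "t*c = t*\<mu>*a - t*b" using assms(4) by (simp add: right_diff_distrib mult_ac)
  moreover have "\<mu>*W = \<mu> + 2*(t*\<mu>*a) + t^2*\<mu>*c" using assms(3) by (simp add: algebra_simps)
  ultimately show ?thesis using assms(1,2) by (simp add: algebra_simps)
qed

lemma nsd:
  fixes M :: "real^'n^'n"
  assumes sym: "\<And>i j. M$i$j = M$j$i"
    and neg: "\<forall>\<mu>. is_eigenvalue M \<mu> \<and> \<mu> \<noteq> 0 \<longrightarrow> \<mu> < 0"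
  shows "x \<bullet> (M *v x) \<le> 0"
proof -
  define q where "q = (\<lambda>y::real^'n. y \<bullet> (M *v y))"
  have cont: "continuous_on (sphere 0 1) q" unfolding q_def
    by (intro continuous_intros continuous_on_compose2[OF linear_continuous_on[OF matrix_vector_mul_bounded_linear]]) auto
  obtain x0 where x0: "x0 \<in> sphere 0 1" and mx: "\<forall>y\<in>sphere 0 1. q y \<le> q x0"
    using continuous_attains_sup[OF compact_sphere _ cont] by (auto simp: sphere_eq_empty)
  define \<mu> where "\<mu> = q x0"
  have n1: "x0 \<bullet> x0 = 1" using x0 by (simp add: dot_square_norm)
  have bound: "q y \<le> \<mu> * (y \<bullet> y)" for y
  proof (cases "y = 0")
    case True then show ?thesis by (simp add: q_def)
  next
    case False
    hence np: "norm y > 0" by simp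
    have "(y /\<^sub>R norm y) \<in> sphere 0 1" using np by simp
    hence "q (y /\<^sub>R norm y) \<le> \<mu>" using mx \<mu>_def by blast
    moreover have "q (y /\<^sub>R norm y) = q y / (norm y)^2"
      by (simp add: q_def matrix_vector_mult_scaleR power2_eq_square divide_inverse)
    ultimately have "q y \<le> \<mu> * (norm y)^2" using np by (simp add: divide_le_eq mult.commute)
    then show ?thesis by (simp add: dot_square_norm)
  qed
  define u where "u = \<mu> *\<^sub>R x0 - M *v x0"
  define P where "P = \<mu> * (u \<bullet> u) - q u"
  have P0: "P \<ge> 0" using bound[of u] unfolding P_def by simp
  have key: "0 \<le> 2 * t * (u \<bullet> u) + t^2 * P" for t
  proof -
    have "q (x0 + t *\<^sub>R u) \<le> \<mu> * ((x0 + t *\<^sub>R u) \<bullet> (x0 + t *\<^sub>R u))" by (rule bound)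
    moreover have "q (x0 + t *\<^sub>R u) = \<mu> + 2 * t * (u \<bullet> (M *v x0)) + t^2 * q u"
      unfolding q_def using quad_expand[OF sym, of x0 t u] \<mu>_def q_def by simp
    moreover have "(x0 + t *\<^sub>R u) \<bullet> (x0 + t *\<^sub>R u) = 1 + 2 * t * (u \<bullet> x0) + t^2 * (u \<bullet> u)"
      using n1 by (simp add: inner_add_left inner_add_right inner_commute power2_eq_square algebra_simps)
    moreover have "u \<bullet> u = \<mu> * (u \<bullet> x0) - u \<bullet> (M *v x0)"
      by (simp add: u_def inner_diff_right)
    ultimately show ?thesis unfolding P_def by (metis arith_aux)
  qed
  have "u = 0"
  proof (rule ccontr)
    assume "u \<noteq> 0"
    hence a: "u \<bullet> u > 0" by simp
    define t where "t = - (u \<bullet> u) / (P + 1)"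
    have "2 * t * (u \<bullet> u) + t^2 * P < 0"
    proof -
      have tn: "t < 0" using a P0 by (simp add: t_def)
      have "t * P > - (u \<bullet> u)" using a P0 by (simp add: t_def field_simps)
      hence "2 * (u \<bullet> u) + t * P > 0" using a by linarith
      hence "t * (2 * (u \<bullet> u) + t * P) < 0" using tn by (simp add: mult_neg_pos)
      thus ?thesis by (simp add: algebra_simps power2_eq_square)
    qed
    thus False using key[of t] by linarith
  qed
  hence "M *v x0 = \<mu> *\<^sub>R x0" by (simp add: u_def)
  moreover have "x0 \<noteq> 0" using x0 by auto
  ultimately have "is_eigenvalue M \<mu>" unfolding is_eigenvalue_def by blast
  hence "\<mu> \<le> 0" using neg by force
  thus ?thesis using bound[of x] unfolding q_def
    by (smt (verit) inner_ge_zero mult_nonpos_nonneg)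
qed
lemma Jsym:
  fixes A :: "real^'n^'n"
  assumes "\<And>i j. A$i$j = A$j$i"
  shows "jacobian K A th $ i $ j = jacobian K A th $ j $ i"
proof -
  have "cos (th$i - th$j) = cos (th$j - th$i)" by (metis minus_diff_eq cos_minus)
  thus ?thesis unfolding jacobian_def using assms by auto
qed

lemma J_mult:
  fixes A :: "real^'n^'n"
  assumes diag: "\<And>i. A$i$i = 0"
  shows "(jacobian K A th *v d) $ i = K * (\<Sum>j\<in>UNIV. A$i$j * cos (th$j - th$i) * (d$j - d$i))"
proof -
  have e: "jacobian K A th $ i $ j = K * A$i$j * cos (th$i - th$j) - (if i = j then K * (\<Sum>l\<in>UNIV. A$i$l * cos (th$i - th$l)) else 0)" for j
    unfolding jacobian_def using diag by auto
  have c: "cos (th$i - th$j) = cos (th$j - th$i)" for j by (metis minus_diff_eq cos_minus)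
  have "(jacobian K A th *v d) $ i = (\<Sum>j\<in>UNIV. jacobian K A th $ i $ j * d$j)"
    by (simp add: matrix_vector_mult_def)
  also have "\<dots> = (\<Sum>j\<in>UNIV. K * A$i$j * cos (th$i - th$j) * d$j) - K * (\<Sum>l\<in>UNIV. A$i$l * cos (th$i - th$l)) * d$i"
    by (simp add: e left_diff_distrib sum_subtractf if_distrib[of "\<lambda>x. x * _"] cong: if_cong)
  also have "\<dots> = K * (\<Sum>j\<in>UNIV. A$i$j * cos (th$j - th$i) * (d$j - d$i))"
    by (simp add: c sum_distrib_left sum_distrib_right flip: sum_subtractf)
       (simp add: algebra_simps)
  finally show ?thesis .
qed

lemma F_deriv:
  fixes \<theta> :: "real \<Rightarrow> real^'n"
  assumes comp: "\<And>i. ((\<lambda>k. \<theta> k $ i) has_real_derivative d$i) (at K)"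
  shows "((\<lambda>k. \<omega>$i + k * (\<Sum>j\<in>UNIV. A$i$j * sin (\<theta> k$j - \<theta> k$i))) has_real_derivative
     (\<Sum>j\<in>UNIV. A$i$j * sin (\<theta> K$j - \<theta> K$i)) + K * (\<Sum>j\<in>UNIV. A$i$j * (cos (\<theta> K$j - \<theta> K$i) * (d$j - d$i)))) (at K)"
  by (rule derivative_eq_intros comp refl | simp add: mult_ac)+

lemma r_deriv:
  fixes \<theta> :: "real \<Rightarrow> real^'n"
  assumes comp: "\<And>i. ((\<lambda>k. \<theta> k $ i) has_real_derivative d$i) (at K)"
  shows "((\<lambda>k. r_uni A (\<theta> k)) has_real_derivative
     (1 / (\<Sum>i\<in>UNIV. degree A i)) * (\<Sum>i\<in>UNIV. \<Sum>j\<in>UNIV. A$i$j * (- sin (\<theta> K$i - \<theta> K$j) * (d$i - d$j)))) (at K)"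
  unfolding r_uni_def
  by (rule derivative_eq_intros comp refl | simp add: mult_ac)+

lemma sum_ident:
  fixes A :: "real^'n^'n"
  assumes sym: "\<And>i j. A$i$j = A$j$i"
  shows "(\<Sum>i\<in>UNIV. \<Sum>j\<in>UNIV. A$i$j * (- sin (th$i - th$j) * (d$i - d$j)))
       = 2 * (\<Sum>i\<in>UNIV. d$i * (\<Sum>j\<in>UNIV. A$i$j * sin (th$j - th$i)))"
proof -
  have s: "- sin (th$i - th$j) = sin (th$j - th$i)" for i j by (metis minus_diff_eq sin_minus)
  have "(\<Sum>i\<in>UNIV. \<Sum>j\<in>UNIV. A$i$j * (- sin (th$i - th$j) * (d$i - d$j)))
     = (\<Sum>i\<in>UNIV. \<Sum>j\<in>UNIV. A$i$j * sin (th$j - th$i) * d$i) - (\<Sum>i\<in>UNIV. \<Sum>j\<in>UNIV. A$i$j * sin (th$j - th$i) * d$j)"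
    by (simp only: s flip: sum_subtractf) (simp add: algebra_simps)
  also have "(\<Sum>i\<in>UNIV. \<Sum>j\<in>UNIV. A$i$j * sin (th$j - th$i) * d$j) = (\<Sum>j\<in>UNIV. \<Sum>i\<in>UNIV. A$i$j * sin (th$j - th$i) * d$j)"
    by (rule sum.swap)
  also have "\<dots> = - (\<Sum>j\<in>UNIV. d$j * (\<Sum>i\<in>UNIV. A$j$i * sin (th$i - th$j)))"
  proof -
    have "A$i$j * sin (th$j - th$i) * d$j = - (d$j * (A$j$i * sin (th$i - th$j)))" for i j
    proof -
      have e: "sin (th$j - th$i) = - sin (th$i - th$j)" using s[of i j] by linarith
      show ?thesis by (simp only: e sym[of i j]) (simp add: algebra_simps)
    qed
    thus ?thesis by (simp add: sum_distrib_left sum_negf)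
  qed
  also have "(\<Sum>i\<in>UNIV. \<Sum>j\<in>UNIV. A$i$j * sin (th$j - th$i) * d$i) = (\<Sum>i\<in>UNIV. d$i * (\<Sum>j\<in>UNIV. A$i$j * sin (th$j - th$i)))"
    by (simp add: sum_distrib_left mult_ac)
  finally show ?thesis by simp
qed

theorem theorem1:
  fixes A :: "real^'n^'n" and \<omega> :: "real^'n"
    and Kc2 K0 :: real
    and \<theta> \<theta>' :: "real \<Rightarrow> real^'n"
    and lam2 :: "real \<Rightarrow> real" and v2 :: "real \<Rightarrow> real^'n"
  assumes N2: "CARD('n) \<ge> 2"
    and graph: "simple_graph_adj A" and conn: "connected_adj A"
    and omega_sum: "(\<Sum>i\<in>UNIV. \<omega>$i) = 0"
    and Kc2_pos: "Kc2 > 0" and Kc2_lt: "Kc2 < K0"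
    and deriv_theta: "\<forall>K\<in>{Kc2<..<K0}. (\<theta> has_vector_derivative \<theta>' K) (at K)"
    and cont_deriv: "continuous_on {Kc2<..<K0} \<theta>'"
    and steady: "\<forall>K\<in>{Kc2<..<K0}. phase_locked \<omega> K A (\<theta> K)"
    and stable: "\<forall>K\<in>{Kc2<..<K0}. stable_state K A (\<theta> K)"
    and lam2_eig: "\<forall>K\<in>{Kc2<..<K0}. lam2 K < 0 \<and> is_eigenvalue (jacobian K A (\<theta> K)) (lam2 K)"
    and lam2_max: "\<forall>K\<in>{Kc2<..<K0}. \<forall>\<mu>. is_eigenvalue (jacobian K A (\<theta> K)) \<mu> \<and> \<mu> \<noteq> 0
                      \<longrightarrow> \<mu> \<le> lam2 K"
    and v2_eig: "\<forall>K\<in>{Kc2<..<K0}. norm (v2 K) = 1 \<and>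
                      jacobian K A (\<theta> K) *v v2 K = lam2 K *\<^sub>R v2 K"
    and lam2_lim: "(lam2 \<longlongrightarrow> 0) (at_right Kc2)"
    and overlap: "\<exists>c>0. \<forall>\<^sub>F K in at_right Kc2. \<bar>v2 K \<bullet> \<omega>\<bar> \<ge> c"
  shows "filterlim (\<lambda>K. deriv (\<lambda>k. r_uni A (\<theta> k)) K) at_top (at_right Kc2)"
proof -
  have symA: "\<And>i j. A$i$j = A$j$i" and diag: "\<And>i. A$i$i = 0" and A01: "\<And>i j. A$i$j = 0 \<or> A$i$j = 1"
    using graph unfolding simple_graph_adj_def by auto
  define S where "S = (\<Sum>i\<in>UNIV. degree A i)"
  have Spos: "S > 0"
  proof -
    obtain i j :: 'n where ij: "i \<noteq> j"
    proof (rule ccontr)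
      assume "\<not> thesis"
      hence all: "\<And>i j::'n. i = j" using that by blast
      obtain i0 :: 'n where True by simp
      have "(UNIV::'n set) = {i0}" using all by auto
      hence "CARD('n) = card {i0}" by (rule arg_cong)
      hence "CARD('n) = 1" by simp
      thus False using N2 by simp
    qed
    have "(i, j) \<in> {(a, b). A$a$b = 1}\<^sup>*" using conn unfolding connected_adj_def by blast
    then obtain y where y: "A$i$y = 1" using ij by (cases rule: converse_rtranclE) auto
    have nn: "\<And>a b. A$a$b \<ge> 0" using A01 by (metis order_refl zero_le_one)
    have "degree A i > 0" unfolding degree_def
      by (rule sum_pos2[of UNIV y]) (use y nn in auto)
    moreover have "\<And>a. degree A a \<ge> 0" unfolding degree_def using nn by (simp add: sum_nonneg)
    ultimately show ?thesis unfolding S_def by (intro sum_pos2[of UNIV i]) auto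
  qed
  have pointwise: "(2 / S) * ((v2 K \<bullet> \<omega>)^2 / K^2) * inverse (- lam2 K) \<le> deriv (\<lambda>k. r_uni A (\<theta> k)) K"
    if K: "K \<in> {Kc2<..<K0}" for K
  proof -
    define d where "d = \<theta>' K"
    define th where "th = \<theta> K"
    define Jm where "Jm = jacobian K A th"
    define lam where "lam = lam2 K"
    define v where "v = v2 K"
    have Kpos: "K > 0" using K Kc2_pos by simp
    have comp: "((\<lambda>k. \<theta> k $ i) has_real_derivative d$i) (at K)" for i
      unfolding has_real_derivative_iff_has_vector_derivative d_def
      using bounded_linear.has_vector_derivative[OF bounded_linear_vec_nth deriv_theta[rule_format, OF K]] .
    define e where "e = min (K - Kc2) (K0 - K)"
    have epos: "e > 0" using K by (simp add: e_def)
    have Jd_i: "(Jm *v d)$i = \<omega>$i / K" for i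
    proof -
      let ?F = "\<lambda>k. \<omega>$i + k * (\<Sum>j\<in>UNIV. A$i$j * sin (\<theta> k$j - \<theta> k$i))"
      have F0: "\<forall>y. \<bar>K - y\<bar> < e \<longrightarrow> ?F K = ?F y"
      proof (intro allI impI)
        fix y assume "\<bar>K - y\<bar> < e"
        hence "y \<in> {Kc2<..<K0}" unfolding e_def by auto
        hence "?F y = 0" using steady unfolding phase_locked_def by blast
        moreover have "?F K = 0" using steady K unfolding phase_locked_def by blast
        ultimately show "?F K = ?F y" by simp
      qed
      have D0: "(\<Sum>j\<in>UNIV. A$i$j * sin (th$j - th$i)) + K * (\<Sum>j\<in>UNIV. A$i$j * (cos (th$j - th$i) * (d$j - d$i))) = 0"
        using DERIV_local_const[OF F_deriv[OF comp] epos F0] unfolding th_def by simp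
      have si: "(\<Sum>j\<in>UNIV. A$i$j * sin (th$j - th$i)) = - \<omega>$i / K"
      proof -
        have "\<omega>$i + K * (\<Sum>j\<in>UNIV. A$i$j * sin (th$j - th$i)) = 0"
          using steady K unfolding phase_locked_def th_def by blast
        hence "(\<Sum>j\<in>UNIV. A$i$j * sin (th$j - th$i)) * K = - \<omega>$i" by (simp add: algebra_simps)
        hence "(\<Sum>j\<in>UNIV. A$i$j * sin (th$j - th$i)) * K / K = - \<omega>$i / K" by simp
        thus ?thesis using Kpos by simp
      qed
      have "(Jm *v d)$i = K * (\<Sum>j\<in>UNIV. A$i$j * (cos (th$j - th$i) * (d$j - d$i)))"
        unfolding Jm_def J_mult[OF diag] by (simp add: mult.assoc)
      also have "\<dots> = \<omega>$i / K" using D0 si by linarith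
      finally show ?thesis .
    qed
    have Jd: "\<omega> = K *\<^sub>R (Jm *v d)" using Jd_i Kpos by (simp add: vec_eq_iff)
    have si: "(\<Sum>j\<in>UNIV. A$i$j * sin (th$j - th$i)) = - \<omega>$i / K" for i
    proof -
      have "\<omega>$i + K * (\<Sum>j\<in>UNIV. A$i$j * sin (th$j - th$i)) = 0"
        using steady K unfolding phase_locked_def th_def by blast
      hence "(\<Sum>j\<in>UNIV. A$i$j * sin (th$j - th$i)) * K = - \<omega>$i" by (simp add: algebra_simps)
      hence "(\<Sum>j\<in>UNIV. A$i$j * sin (th$j - th$i)) * K / K = - \<omega>$i / K" by simp
        thus ?thesis using Kpos by simp
    qed
    have dv: "deriv (\<lambda>k. r_uni A (\<theta> k)) K = - (2 / S) * (d \<bullet> (Jm *v d))"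
    proof -
      have "deriv (\<lambda>k. r_uni A (\<theta> k)) K = (1 / S) * (\<Sum>i\<in>UNIV. \<Sum>j\<in>UNIV. A$i$j * (- sin (th$i - th$j) * (d$i - d$j)))"
        using DERIV_imp_deriv[OF r_deriv[OF comp]] unfolding S_def th_def .
      also have "\<dots> = (1 / S) * (2 * (\<Sum>i\<in>UNIV. d$i * (- \<omega>$i / K)))"
        by (simp only: sum_ident[OF symA] si)
      also have "(\<Sum>i\<in>UNIV. d$i * (- \<omega>$i / K)) = - (d \<bullet> \<omega>) / K"
        by (simp add: inner_vec_def sum_divide_distrib sum_negf)
      also have "d \<bullet> \<omega> = K * (d \<bullet> (Jm *v d))" by (subst Jd) simp
      finally show ?thesis using Kpos by simp
    qed
    have Jsy: "\<And>i j. Jm$i$j = Jm$j$i" unfolding Jm_def by (rule Jsym[OF symA])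
    have neg: "\<forall>\<mu>. is_eigenvalue Jm \<mu> \<and> \<mu> \<noteq> 0 \<longrightarrow> \<mu> < 0"
      using stable K unfolding stable_state_def Let_def Jm_def th_def by blast
    have vn: "v \<bullet> v = 1" and Jv: "Jm *v v = lam *\<^sub>R v" and lneg: "lam < 0"
      using v2_eig K lam2_eig unfolding v_def Jm_def th_def lam_def by (auto simp: dot_square_norm)
    define a where "a = v \<bullet> d"
    have vo: "v \<bullet> \<omega> = K * lam * a"
    proof -
      have "v \<bullet> \<omega> = K * (v \<bullet> (Jm *v d))" by (subst Jd) simp
      also have "v \<bullet> (Jm *v d) = d \<bullet> (Jm *v v)" by (rule sym_dot[OF Jsy])
      also have "\<dots> = lam * a" by (simp add: Jv a_def inner_commute)
      finally show ?thesis by simp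
    qed
    define w where "w = d - a *\<^sub>R v"
    have dw: "d = w + a *\<^sub>R v" by (simp add: w_def)
    have "w \<bullet> v = d \<bullet> v - a * (v \<bullet> v)" by (simp add: w_def inner_diff_left)
    hence wv: "w \<bullet> v = 0" by (simp add: vn a_def inner_commute)
    have q: "d \<bullet> (Jm *v d) \<le> a^2 * lam"
    proof -
      have "d \<bullet> (Jm *v d) = w \<bullet> (Jm *v w) + 2 * a * (v \<bullet> (Jm *v w)) + a^2 * (v \<bullet> (Jm *v v))"
        unfolding dw by (rule quad_expand[OF Jsy])
      moreover have "v \<bullet> (Jm *v w) = 0" using sym_dot[OF Jsy, of v w] by (simp add: Jv wv)
      moreover have "v \<bullet> (Jm *v v) = lam" by (simp add: Jv vn)
      moreover have "w \<bullet> (Jm *v w) \<le> 0" by (rule nsd[OF Jsy neg])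
      ultimately show ?thesis by simp
    qed
    have aeq: "a = (v \<bullet> \<omega>) / (K * lam)" using vo Kpos lneg by simp
    have "(2 / S) * ((v \<bullet> \<omega>)^2 / K^2) * inverse (- lam) = - (2 / S) * (a^2 * lam)"
      using Kpos lneg by (simp add: aeq field_simps power2_eq_square)
    also have "\<dots> \<le> - (2 / S) * (d \<bullet> (Jm *v d))" using q Spos by (simp add: divide_right_mono)
    finally show ?thesis unfolding dv v_def lam_def .
  qed
  obtain c where cpos: "c > 0" and cev: "\<forall>\<^sub>F K in at_right Kc2. \<bar>v2 K \<bullet> \<omega>\<bar> \<ge> c"
    using overlap by blast
  have evI: "\<forall>\<^sub>F K in at_right Kc2. K \<in> {Kc2<..<K0}" by (rule eventually_at_right_real[OF Kc2_lt])
  have evneg: "\<forall>\<^sub>F K in at_right Kc2. 0 < - lam2 K"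
    using evI by eventually_elim (use lam2_eig in auto)
  have lim_inv: "filterlim (\<lambda>K. inverse (- lam2 K)) at_top (at_right Kc2)"
    by (rule filterlim_inverse_at_top[OF _ evneg]) (use tendsto_minus[OF lam2_lim] in simp)
  define C where "C = (2 / S) * (c^2 / K0^2)"
  have Cpos: "C > 0" using Spos cpos Kc2_lt Kc2_pos by (simp add: C_def)
  have lim_g: "filterlim (\<lambda>K. C * inverse (- lam2 K)) at_top (at_right Kc2)"
    by (rule filterlim_tendsto_pos_mult_at_top[OF tendsto_const Cpos lim_inv])
  show ?thesis
  proof (rule filterlim_at_top_mono[OF lim_g])
    show "\<forall>\<^sub>F K in at_right Kc2. C * inverse (- lam2 K) \<le> deriv (\<lambda>k. r_uni A (\<theta> k)) K"
      using evI cev evneg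
    proof eventually_elim
      case (elim K)
      have Kp: "K > 0" "K < K0" using elim Kc2_pos by auto
      have c2: "c^2 \<le> (v2 K \<bullet> \<omega>)^2"
        using power_mono[OF elim(2), of 2] cpos by simp
      have "c^2 / K0^2 \<le> (v2 K \<bullet> \<omega>)^2 / K^2"
        by (rule frac_le) (use c2 Kp in \<open>auto intro: power_strict_mono\<close>)
      hence "C \<le> (2 / S) * ((v2 K \<bullet> \<omega>)^2 / K^2)" unfolding C_def using Spos by (intro mult_left_mono) simp_all
      hence "C * inverse (- lam2 K) \<le> (2 / S) * ((v2 K \<bullet> \<omega>)^2 / K^2) * inverse (- lam2 K)"
        using elim(3) by (intro mult_right_mono) simp_all
      also have "\<dots> \<le> deriv (\<lambda>k. r_uni A (\<theta> k)) K" by (rule pointwise[OF elim(1)])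
      finally show ?case .
    qed
  qed
qed

end
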